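(* Let $\mathcal T=(T,\lambda)$ be a temporal oriented tree and let $u,v,w,x$ be pairwise distinct vertices of $T$ such that there is at least one temporal path from $u$ to $v$, at least one temporal path from $w$ to $x$, and every temporal path from $u$ to $v$ has a vertex in common with every temporal path from $w$ to $x$. Then there is a temporal path from $u$ to $x$ or a temporal path from $w$ to $v$.
   Context: A temporal digraph is a pair $(D,\lambda)$ with $D=(V,A)$ a finite digraph and $\lambda:A\to 2^{\{1,\dots,t_{\max}\}}$ giving the time-steps at which each arc is active. A temporal oriented tree $\mathcal T=(T,\lambda)$ is one whose underlying digraph $T$ is an orientation of a tree. A temporal path from $v_1$ to $v_k$ is a sequence $(v_1,v_2,t_1),\dots,(v_{k-1},v_k,t_{k-1})$ with pairwise distinct $v_i$, $\overrightarrow{v_iv_{i+1}}\in A$, $t_i\in\lambda(\overrightarrow{v_iv_{i+1}})$ and $t_1<\dots<t_{k-1}$ (strictly increasing). *)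

theory Defs
  imports Main
begin

definition temporal_digraph ::
  "'a set \<Rightarrow> ('a \<times> 'a) set \<Rightarrow> ('a \<times> 'a \<Rightarrow> nat set) \<Rightarrow> nat \<Rightarrow> bool" where
  "temporal_digraph V A lam tmax \<longleftrightarrow>
     finite V \<and> A \<subseteq> V \<times> V \<and> (\<forall>a\<in>A. lam a \<subseteq> {1..tmax})"

definition und_adj :: "('a \<times> 'a) set \<Rightarrow> 'a \<Rightarrow> 'a \<Rightarrow> bool" where
  "und_adj A x y \<longleftrightarrow> (x, y) \<in> A \<or> (y, x) \<in> A"

definition und_cycle :: "('a \<times> 'a) set \<Rightarrow> 'a list \<Rightarrow> bool" where
  "und_cycle A cs \<longleftrightarrow> length cs \<ge> 3 \<and> distinct cs \<and>
     (\<forall>i. Suc i < length cs \<longrightarrow> und_adj A (cs ! i) (cs ! Suc i)) \<and>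
     und_adj A (last cs) (hd cs)"

definition oriented_tree :: "'a set \<Rightarrow> ('a \<times> 'a) set \<Rightarrow> bool" where
  "oriented_tree V A \<longleftrightarrow>
     finite V \<and> V \<noteq> {} \<and> A \<subseteq> V \<times> V \<and>
     (\<forall>x y. (x, y) \<in> A \<longrightarrow> x \<noteq> y \<and> (y, x) \<notin> A) \<and>
     (\<forall>x\<in>V. \<forall>y\<in>V. (x, y) \<in> {(a, b). und_adj A a b}\<^sup>*) \<and>
     (\<nexists>cs. und_cycle A cs)"

definition temporal_oriented_tree ::
  "'a set \<Rightarrow> ('a \<times> 'a) set \<Rightarrow> ('a \<times> 'a \<Rightarrow> nat set) \<Rightarrow> nat \<Rightarrow> bool" where
  "temporal_oriented_tree V A lam tmax \<longleftrightarrow>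
     temporal_digraph V A lam tmax \<and> oriented_tree V A"

definition temporal_path ::
  "('a \<times> 'a) set \<Rightarrow> ('a \<times> 'a \<Rightarrow> nat set) \<Rightarrow> 'a list \<Rightarrow> nat list \<Rightarrow> bool" where
  "temporal_path A lam vs ts \<longleftrightarrow>
     vs \<noteq> [] \<and> length ts = length vs - 1 \<and> distinct vs \<and>
     (\<forall>i < length ts. (vs ! i, vs ! Suc i) \<in> A \<and> ts ! i \<in> lam (vs ! i, vs ! Suc i)) \<and>
     sorted_wrt (<) ts"

definition temporal_path_from_to ::
  "('a \<times> 'a) set \<Rightarrow> ('a \<times> 'a \<Rightarrow> nat set) \<Rightarrow> 'a \<Rightarrow> 'a \<Rightarrow> 'a list \<Rightarrow> nat list \<Rightarrow> bool" where
  "temporal_path_from_to A lam s t vs ts \<longleftrightarrow>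
     temporal_path A lam vs ts \<and> hd vs = s \<and> last vs = t"

end

theory Submission
  imports Defs
begin

fun twalk :: "('a \<times> 'a) set \<Rightarrow> ('a \<times> 'a \<Rightarrow> nat set) \<Rightarrow> 'a list \<Rightarrow> nat list \<Rightarrow> bool" where
  "twalk A lam [v] [] = True"
| "twalk A lam (v # w # vs) (t # ts) =
     ((v, w) \<in> A \<and> t \<in> lam (v, w) \<and> twalk A lam (w # vs) ts \<and> (\<forall>t'\<in>set ts. t < t'))"
| "twalk A lam _ _ = False"

lemma path_iff: "temporal_path A lam vs ts \<longleftrightarrow> twalk A lam vs ts \<and> distinct vs"
proof (induction A lam vs ts rule: twalk.induct)
  case (2 A lam v w vs t ts)
  have e: "(\<forall>i < length (t#ts). ((v#w#vs) ! i, (v#w#vs) ! Suc i) \<in> A \<and> (t#ts) ! i \<in> lam ((v#w#vs) ! i, (v#w#vs) ! Suc i))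
     \<longleftrightarrow> ((v,w) \<in> A \<and> t \<in> lam (v,w) \<and> (\<forall>i < length ts. ((w#vs) ! i, (w#vs) ! Suc i) \<in> A \<and> ts ! i \<in> lam ((w#vs) ! i, (w#vs) ! Suc i)))"
    by (auto simp: less_Suc_eq_0_disj)
  show ?case using 2 e unfolding temporal_path_def by auto
qed (auto simp: temporal_path_def)

lemma twalk_nil[simp]: "twalk A lam (y # zs) [] \<longleftrightarrow> zs = []"
  by (cases zs) auto

lemma twalk_sorted: "twalk A lam vs ts \<Longrightarrow> sorted_wrt (<) ts"
  by (induction A lam vs ts rule: twalk.induct) auto

lemma twalk_ne: "twalk A lam vs ts \<Longrightarrow> vs \<noteq> []"
  by (induction A lam vs ts rule: twalk.induct) auto

lemma twalk_split:
  "twalk A lam (xs @ a # ys) ts \<Longrightarrow> \<exists>t1 t2. ts = t1 @ t2 \<and> twalk A lam (xs @ [a]) t1 \<and> twalk A lam (a # ys) t2"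
proof (induction xs arbitrary: ts)
  case Nil
  then show ?case by (rule_tac x="[]" in exI) auto
next
  case (Cons y xs)
  then obtain t ts' where ts: "ts = t # ts'" by (cases ts) auto
  show ?case
  proof (cases xs)
    case Nil
    with Cons.prems ts have "twalk A lam (a # ys) ts'" by auto
    with Cons.prems ts Nil show ?thesis by (rule_tac x="[t]" in exI) auto
  next
    case (Cons z zs)
    with Cons.prems ts have "twalk A lam (xs @ a # ys) ts'" by auto
    then obtain t1 t2 where "ts' = t1 @ t2" "twalk A lam (xs @ [a]) t1" "twalk A lam (a # ys) t2"
      using Cons.IH by blast
    with Cons.prems ts Cons show ?thesis by (rule_tac x="t#t1" in exI) auto
  qed
qed

lemma twalk_append:
  "twalk A lam (xs @ [a]) t1 \<Longrightarrow> twalk A lam (a # ys) t2 \<Longrightarrow> (\<forall>p\<in>set t1. \<forall>q\<in>set t2. p < q)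
   \<Longrightarrow> twalk A lam (xs @ a # ys) (t1 @ t2)"
proof (induction xs arbitrary: t1)
  case Nil
  then show ?case by (cases t1) auto
next
  case (Cons y xs)
  then obtain t ts' where ts: "t1 = t # ts'" by (cases t1) auto
  show ?case
  proof (cases xs)
    case Nil
    with Cons.prems ts show ?thesis by (cases ts') auto
  next
    case (Cons z zs)
    with Cons.prems ts have "twalk A lam (xs @ [a]) ts'" by auto
    with Cons.IH Cons.prems ts have "twalk A lam (xs @ a # ys) (ts' @ t2)" by auto
    with Cons.prems ts Cons show ?thesis by auto
  qed
qed

lemma twalk_shortcut:
  "twalk A lam vs ts \<Longrightarrow> \<exists>vs' ts'. twalk A lam vs' ts' \<and> distinct vs' \<and> hd vs' = hd vs
     \<and> last vs' = last vs \<and> set ts' \<subseteq> set ts"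
proof (induction A lam vs ts rule: twalk.induct)
  case (1 A lam v)
  show ?case by (rule exI[of _ "[v]"], rule exI[of _ "[]"]) simp
next
  case (2 A lam v w vs t ts)
  from 2(2) have st: "(v, w) \<in> A" "t \<in> lam (v, w)" "twalk A lam (w # vs) ts" "\<forall>t'\<in>set ts. t < t'"
    by simp_all
  from 2(1)[OF st(3)] obtain vs' ts' where ih: "twalk A lam vs' ts'" "distinct vs'" "hd vs' = w"
     "last vs' = last (w # vs)" "set ts' \<subseteq> set ts"
    by (elim exE conjE) (simp only: list.sel(1))
  show ?case
  proof (cases "v \<in> set vs'")
    case False
    have "vs' \<noteq> []" using ih(1) twalk_ne by blast
    then obtain vs'' where vs': "vs' = w # vs''" using ih(3) by (cases vs') auto
    have w1: "twalk A lam (w # vs'') ts'" using ih(1) vs' by simp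
    have w2: "\<forall>t'\<in>set ts'. t < t'" using ih(5) st(4) by blast
    have "twalk A lam (v # w # vs'') (t # ts')" using st(1,2) w1 w2 by (simp only: twalk.simps simp_thms)
    moreover have "distinct (v # w # vs'')" using False ih(2) vs' by simp
    moreover have "last (v # w # vs'') = last (v # w # vs)" using ih(4) vs' by simp
    moreover have "set (t # ts') \<subseteq> set (t # ts)" using ih(5) by auto
    ultimately show ?thesis by (intro exI[of _ "v # w # vs''"] exI[of _ "t # ts'"]) simp
  next
    case True
    then obtain xs ys where s: "vs' = xs @ v # ys" by (meson split_list)
    have "twalk A lam (xs @ v # ys) ts'" using ih(1) s by simp
    from twalk_split[OF this] obtain t1 t2 where tt: "ts' = t1 @ t2" "twalk A lam (v # ys) t2"
      by blast
    have "distinct (v # ys)" using ih(2) s by simp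
    moreover have "last (v # ys) = last (v # w # vs)" using ih(4) s by simp
    moreover have "set t2 \<subseteq> set (t # ts)" using ih(5) tt(1) by auto
    ultimately show ?thesis using tt(2) by (intro exI[of _ "v # ys"] exI[of _ t2]) simp
  qed
qed simp_all

lemma walk_to_path:
  assumes "twalk A lam vs ts" "hd vs = s" "last vs = t"
  shows "\<exists>ps pt. temporal_path_from_to A lam s t ps pt"
  using twalk_shortcut[OF assms(1)] assms unfolding temporal_path_from_to_def path_iff by blast

theorem mainTheorem6:
  fixes V :: "'a set" and A :: "('a \<times> 'a) set" and lam :: "'a \<times> 'a \<Rightarrow> nat set"
    and tmax :: nat and u v w x :: 'a
  assumes "temporal_oriented_tree V A lam tmax"
    and "u \<in> V" and "v \<in> V" and "w \<in> V" and "x \<in> V"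
    and "distinct [u, v, w, x]"
    and "\<exists>ps pt. temporal_path_from_to A lam u v ps pt"
    and "\<exists>qs qt. temporal_path_from_to A lam w x qs qt"
    and "\<forall>ps pt qs qt. temporal_path_from_to A lam u v ps pt \<longrightarrow>
           temporal_path_from_to A lam w x qs qt \<longrightarrow> set ps \<inter> set qs \<noteq> {}"
  shows "(\<exists>ps pt. temporal_path_from_to A lam u x ps pt) \<or>
         (\<exists>ps pt. temporal_path_from_to A lam w v ps pt)"
proof -
  obtain ps pt where P: "temporal_path_from_to A lam u v ps pt" using assms(7) by blast
  obtain qs qt where Q: "temporal_path_from_to A lam w x qs qt" using assms(8) by blast
  obtain a where a: "a \<in> set ps" "a \<in> set qs" using assms(9) P Q by blast
  obtain xs ys where ps: "ps = xs @ a # ys" using a(1) by (meson split_list)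
  obtain xs' ys' where qs: "qs = xs' @ a # ys'" using a(2) by (meson split_list)
  have Pw: "twalk A lam ps pt" and Qw: "twalk A lam qs qt"
    using P Q by (auto simp: temporal_path_from_to_def path_iff)
  obtain p1 p2 where p: "pt = p1 @ p2" "twalk A lam (xs @ [a]) p1" "twalk A lam (a # ys) p2"
    using twalk_split[OF Pw[unfolded ps]] by blast
  obtain q1 q2 where q: "qt = q1 @ q2" "twalk A lam (xs' @ [a]) q1" "twalk A lam (a # ys') q2"
    using twalk_split[OF Qw[unfolded qs]] by blast
  have sp: "\<forall>y\<in>set p1. \<forall>z\<in>set p2. y < z" using twalk_sorted[OF Pw] p(1) by (simp add: sorted_wrt_append)
  have sq: "\<forall>y\<in>set q1. \<forall>z\<in>set q2. y < z" using twalk_sorted[OF Qw] q(1) by (simp add: sorted_wrt_append)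
  have hu: "hd (xs @ a # ys') = u" using P ps by (cases xs) (auto simp: temporal_path_from_to_def)
  have lx: "last (xs @ a # ys') = x" using Q qs by (auto simp: temporal_path_from_to_def)
  have hw: "hd (xs' @ a # ys) = w" using Q qs by (cases xs') (auto simp: temporal_path_from_to_def)
  have lv: "last (xs' @ a # ys) = v" using P ps by (auto simp: temporal_path_from_to_def)
  show ?thesis
  proof (cases "\<forall>y\<in>set p1. \<forall>z\<in>set q2. y < z")
    case True
    then show ?thesis using walk_to_path[OF twalk_append[OF p(2) q(3) True] hu lx] by blast
  next
    case F1: False
    show ?thesis
    proof (cases "\<forall>y\<in>set q1. \<forall>z\<in>set p2. y < z")
      case True
      then show ?thesis using walk_to_path[OF twalk_append[OF q(2) p(3) True] hw lv] by blast
    next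
      case False
      then obtain a1 b1 a2 b2 where "a1 \<in> set p1" "b1 \<in> set q2" "b1 \<le> a1"
        "a2 \<in> set q1" "b2 \<in> set p2" "b2 \<le> a2" using F1 by (auto simp: not_less)
      with sp sq have False by (meson le_less_trans less_le_trans less_asym)
      then show ?thesis ..
    qed
  qed
qed

end
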